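(* Let $\mathbf D$ be a set of tilings containing both $\emptyset$ and $\Lambda$ (a normal super-domain). Then $\mathbf D$ is a clique (its elements are pairwise compatible) if and only if $\mathbf D$ is a Condorcet super-domain.
   Context: Fix an integer $n\ge 3$ and write $[n]=\{1,\dots,n\}$. Let $\Lambda$ be the set of 3-element subsets of $[n]$; a triple $\{i,j,k\}$ with $i<j<k$ is written $ijk$. For a 4-element subset $F=\{i<j<k<l\}$ of $[n]$, the stick of $F$ is the sequence $(ijk,\ ijl,\ ikl,\ jkl)$. A tiling (the inversion set of a rhombus tiling of the zonogon $Z(n;2)$) is a subset $T\subseteq\Lambda$ such that for every 4-element $F\subseteq[n]$, $T\cap\mathrm{stick}(F)$ is an initial segment or a final segment of the stick (empty set and whole stick allowed). Two tilings $T,T'$ are compatible if both $T\cap T'$ and $T\cup T'$ are tilings. For a finite set $V$ of odd cardinality and tilings $(T_v)_{v\in V}$, $sm((T_v)_{v\in V})$ is the set of triples lying in $T_v$ for more than $|V|/2$ indices $v$. A set $\mathbf D$ of tilings is a Condorcet super-domain if for every finite $V$ of odd cardinality and every family $(T_v)_{v\in V}$ with all $T_v\in\mathbf D$, $sm((T_v)_{v\in V})$ is a tiling. *)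

theory Defs
  imports Main
begin

definition Lambda :: "nat \<Rightarrow> nat set set" where
  "Lambda n = {t. t \<subseteq> {1..n} \<and> card t = 3}"

definition stick :: "nat \<Rightarrow> nat \<Rightarrow> nat \<Rightarrow> nat \<Rightarrow> nat set list" where
  "stick i j k l = [{i,j,k}, {i,j,l}, {i,k,l}, {j,k,l}]"

definition is_tiling :: "nat \<Rightarrow> nat set set \<Rightarrow> bool" where
  "is_tiling n T \<longleftrightarrow> T \<subseteq> Lambda n \<and>
     (\<forall>i j k l. 1 \<le> i \<and> i < j \<and> j < k \<and> k < l \<and> l \<le> n \<longrightarrow>
        (\<exists>m \<le> 4. T \<inter> set (stick i j k l) = set (take m (stick i j k l))
               \<or> T \<inter> set (stick i j k l) = set (drop m (stick i j k l))))"

definition compatible :: "nat \<Rightarrow> nat set set \<Rightarrow> nat set set \<Rightarrow> bool" where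
  "compatible n T T' \<longleftrightarrow> is_tiling n (T \<inter> T') \<and> is_tiling n (T \<union> T')"

definition is_clique :: "nat \<Rightarrow> nat set set set \<Rightarrow> bool" where
  "is_clique n D \<longleftrightarrow> (\<forall>T\<in>D. \<forall>T'\<in>D. compatible n T T')"

definition sm :: "nat \<Rightarrow> 'v set \<Rightarrow> ('v \<Rightarrow> nat set set) \<Rightarrow> nat set set" where
  "sm n V T = {t \<in> Lambda n. 2 * card {v \<in> V. t \<in> T v} > card V}"

text \<open>Index sets V are taken as finite sets of naturals (any finite set is in bijection with one).\<close>
definition condorcet_super_domain :: "nat \<Rightarrow> nat set set set \<Rightarrow> bool" where
  "condorcet_super_domain n D \<longleftrightarrow> (\<forall>D' \<in> D. is_tiling n D') \<and>
     (\<forall>(V::nat set) T. finite V \<and> odd (card V) \<and> (\<forall>v\<in>V. T v \<in> D) \<longrightarrow> is_tiling n (sm n V T))"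

end

theory Submission
  imports Defs
begin

definition bad3 :: "bool \<Rightarrow> bool \<Rightarrow> bool \<Rightarrow> bool" where
  "bad3 x y z \<longleftrightarrow> x = z \<and> x \<noteq> y"

definition good4 :: "bool \<Rightarrow> bool \<Rightarrow> bool \<Rightarrow> bool \<Rightarrow> bool" where
  "good4 x1 x2 x3 x4 \<longleftrightarrow> \<not> bad3 x1 x2 x3 \<and> \<not> bad3 x1 x2 x4 \<and> \<not> bad3 x1 x3 x4 \<and> \<not> bad3 x2 x3 x4"

lemma ex_le4: "(\<exists>m\<le>(4::nat). P m) \<longleftrightarrow> P 0 \<or> P 1 \<or> P 2 \<or> P 3 \<or> P 4"
proof -
  have "{m. m \<le> (4::nat)} = {0,1,2,3,4}" by auto
  then show ?thesis by (metis (mono_tags, lifting) empty_iff insert_iff mem_Collect_eq)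
qed

lemma seg_iff:
  assumes "distinct [a,b,c,d]"
  shows "(\<exists>m\<le>4. S \<inter> set [a,b,c,d] = set (take m [a,b,c,d]) \<or> S \<inter> set [a,b,c,d] = set (drop m [a,b,c,d]))
     \<longleftrightarrow> good4 (a\<in>S) (b\<in>S) (c\<in>S) (d\<in>S)"
proof -
  have key: "S \<inter> {a,b,c,d} = X \<longleftrightarrow> (a\<in>S \<longleftrightarrow> a\<in>X) \<and> (b\<in>S \<longleftrightarrow> b\<in>X) \<and> (c\<in>S \<longleftrightarrow> c\<in>X) \<and> (d\<in>S \<longleftrightarrow> d\<in>X)"
    if "X \<subseteq> {a,b,c,d}" for X using that by blast
  have t: "take 0 [a,b,c,d] = []" "take 1 [a,b,c,d] = [a]" "take 2 [a,b,c,d] = [a,b]"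
     "take 3 [a,b,c,d] = [a,b,c]" "take 4 [a,b,c,d] = [a,b,c,d]"
     "drop 0 [a,b,c,d] = [a,b,c,d]" "drop 1 [a,b,c,d] = [b,c,d]" "drop 2 [a,b,c,d] = [c,d]"
     "drop 3 [a,b,c,d] = [d]" "drop 4 [a,b,c,d] = []" by (simp_all add: numeral_eq_Suc)
  show ?thesis unfolding ex_le4 t using assms
    apply (simp only: list.set key insert_subset empty_subsetI insert_iff simp_thms empty_iff)
    apply (simp only: distinct.simps list.set insert_iff empty_iff simp_thms de_Morgan_disj)
    apply (elim conjE)
    apply (cases "a\<in>S"; cases "b\<in>S"; cases "c\<in>S"; cases "d\<in>S")
    apply (simp_all add: good4_def bad3_def)
    done
qed

lemma stick_distinct:
  assumes "i < j" "j < k" "k < l"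
  shows "distinct (stick i j k l)"
  using assms unfolding stick_def by (auto simp: insert_eq_iff doubleton_eq_iff)

lemma stick_Lambda:
  assumes "1 \<le> i" "i < j" "j < k" "k < l" "l \<le> n"
  shows "set (stick i j k l) \<subseteq> Lambda n"
  using assms unfolding stick_def Lambda_def by auto

lemma tiling_iff:
  "is_tiling n S \<longleftrightarrow> S \<subseteq> Lambda n \<and>
     (\<forall>i j k l. 1 \<le> i \<and> i < j \<and> j < k \<and> k < l \<and> l \<le> n \<longrightarrow>
        good4 ({i,j,k}\<in>S) ({i,j,l}\<in>S) ({i,k,l}\<in>S) ({j,k,l}\<in>S))"
proof -
  have "\<And>i j k l. i < j \<Longrightarrow> j < k \<Longrightarrow> k < l \<Longrightarrow>
     (\<exists>m \<le> 4. S \<inter> set (stick i j k l) = set (take m (stick i j k l))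
               \<or> S \<inter> set (stick i j k l) = set (drop m (stick i j k l)))
     \<longleftrightarrow> good4 ({i,j,k}\<in>S) ({i,j,l}\<in>S) ({i,k,l}\<in>S) ({j,k,l}\<in>S)"
  proof -
    fix i j k l :: nat assume h: "i < j" "j < k" "k < l"
    show "?thesis i j k l"
      using seg_iff[OF stick_distinct[OF h, unfolded stick_def], of S] unfolding stick_def .
  qed
  then show ?thesis unfolding is_tiling_def by (meson less_imp_le)
qed

lemma exists_diff:
  assumes "finite V" "2 * card {v\<in>V. x \<in> T v} > card V" "\<not> 2 * card {v\<in>V. y \<in> T v} > card V"
  shows "\<exists>v\<in>V. x \<in> T v \<and> y \<notin> T v"
proof (rule ccontr)
  assume "\<not> ?thesis"
  then have "{v\<in>V. x \<in> T v} \<subseteq> {v\<in>V. y \<in> T v}" by auto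
  then have "card {v\<in>V. x \<in> T v} \<le> card {v\<in>V. y \<in> T v}" using assms(1) by (simp add: card_mono)
  then show False using assms(2,3) by linarith
qed

lemma maj_good:
  assumes fin: "finite V" and L: "x \<in> Lambda n" "y \<in> Lambda n" "z \<in> Lambda n"
    and comp: "\<forall>v\<in>V. \<forall>w\<in>V. \<not> bad3 (x \<in> T v \<union> T w) (y \<in> T v \<union> T w) (z \<in> T v \<union> T w)
                 \<and> \<not> bad3 (x \<in> T v \<inter> T w) (y \<in> T v \<inter> T w) (z \<in> T v \<inter> T w)"
  shows "\<not> bad3 (x \<in> sm n V T) (y \<in> sm n V T) (z \<in> sm n V T)"
proof
  assume b: "bad3 (x \<in> sm n V T) (y \<in> sm n V T) (z \<in> sm n V T)"
  show False
  proof (cases "y \<in> sm n V T")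
    case True
    then have "x \<notin> sm n V T" "z \<notin> sm n V T" using b unfolding bad3_def by auto
    with True L have h: "2 * card {v\<in>V. y \<in> T v} > card V" "\<not> 2 * card {v\<in>V. x \<in> T v} > card V"
      "\<not> 2 * card {v\<in>V. z \<in> T v} > card V" unfolding sm_def by auto
    obtain v where v: "v\<in>V" "y \<in> T v" "x \<notin> T v" using exists_diff[OF fin h(1,2)] by blast
    obtain w where w: "w\<in>V" "y \<in> T w" "z \<notin> T w" using exists_diff[OF fin h(1,3)] by blast
    show False using comp v w unfolding bad3_def by blast
  next
    case False
    then have "x \<in> sm n V T" "z \<in> sm n V T" using b unfolding bad3_def by auto
    with False L have h: "\<not> 2 * card {v\<in>V. y \<in> T v} > card V" "2 * card {v\<in>V. x \<in> T v} > card V"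
      "2 * card {v\<in>V. z \<in> T v} > card V" unfolding sm_def by auto
    obtain v where v: "v\<in>V" "x \<in> T v" "y \<notin> T v" using exists_diff[OF fin h(2,1)] by blast
    obtain w where w: "w\<in>V" "z \<in> T w" "y \<notin> T w" using exists_diff[OF fin h(3,1)] by blast
    show False using comp v w unfolding bad3_def by blast
  qed
qed

lemma clique_condorcet:
  assumes cl: "is_clique n D" and tl: "\<forall>T\<in>D. is_tiling n T"
  shows "condorcet_super_domain n D"
  unfolding condorcet_super_domain_def
proof (intro conjI allI impI)
  show "\<forall>D'\<in>D. is_tiling n D'" using tl .
  fix V :: "nat set" and T
  assume a: "finite V \<and> odd (card V) \<and> (\<forall>v\<in>V. T v \<in> D)"
  have ti: "is_tiling n (T v \<union> T w) \<and> is_tiling n (T v \<inter> T w)" if "v\<in>V" "w\<in>V" for v w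
    using cl a that unfolding is_clique_def compatible_def by blast
  show "is_tiling n (sm n V T)"
    unfolding tiling_iff
  proof (intro conjI allI impI)
    show "sm n V T \<subseteq> Lambda n" unfolding sm_def by auto
    fix i j k l assume r: "1 \<le> i \<and> i < j \<and> j < k \<and> k < l \<and> l \<le> n"
    have L: "{i,j,k} \<in> Lambda n" "{i,j,l} \<in> Lambda n" "{i,k,l} \<in> Lambda n" "{j,k,l} \<in> Lambda n"
      using stick_Lambda[of i j k l n] r unfolding stick_def by auto
    have g: "good4 ({i,j,k}\<in>S) ({i,j,l}\<in>S) ({i,k,l}\<in>S) ({j,k,l}\<in>S)"
      if "is_tiling n S" for S using that r unfolding tiling_iff by blast
    have gg: "\<forall>v\<in>V. \<forall>w\<in>V. good4 ({i,j,k}\<in>T v \<union> T w) ({i,j,l}\<in>T v \<union> T w) ({i,k,l}\<in>T v \<union> T w) ({j,k,l}\<in>T v \<union> T w)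
       \<and> good4 ({i,j,k}\<in>T v \<inter> T w) ({i,j,l}\<in>T v \<inter> T w) ({i,k,l}\<in>T v \<inter> T w) ({j,k,l}\<in>T v \<inter> T w)"
      using ti g by blast
    show "good4 ({i,j,k}\<in>sm n V T) ({i,j,l}\<in>sm n V T) ({i,k,l}\<in>sm n V T) ({j,k,l}\<in>sm n V T)"
      unfolding good4_def
      apply (intro conjI)
      apply (rule maj_good[OF _ L(1) L(2) L(3)]; use a gg good4_def in blast)
      apply (rule maj_good[OF _ L(1) L(2) L(4)]; use a gg good4_def in blast)
      apply (rule maj_good[OF _ L(1) L(3) L(4)]; use a gg good4_def in blast)
      apply (rule maj_good[OF _ L(2) L(3) L(4)]; use a gg good4_def in blast)
      done
  qed
qed

lemma sm3:
  assumes "T \<subseteq> Lambda n" "T' \<subseteq> Lambda n" "X = {} \<or> X = Lambda n"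
  shows "sm n {0,1,2::nat} (\<lambda>v. if v = 0 then T else if v = 1 then T' else X)
       = (if X = {} then T \<inter> T' else T \<union> T')"
proof -
  have c: "{v\<in>{0,1,2::nat}. t \<in> (if v = 0 then T else if v = 1 then T' else X)}
     = (if t \<in> T then {0} else {}) \<union> (if t \<in> T' then {1} else {}) \<union> (if t \<in> X then {2} else {})" for t
    by auto
  show ?thesis using assms unfolding sm_def c by (auto split: if_splits)
qed

lemma condorcet_clique:
  assumes cs: "condorcet_super_domain n D" and e: "{} \<in> D" "Lambda n \<in> D"
  shows "is_clique n D"
  unfolding is_clique_def compatible_def
proof (intro ballI conjI)
  fix T T' assume t: "T \<in> D" "T' \<in> D"
  have sub: "T \<subseteq> Lambda n" "T' \<subseteq> Lambda n" using cs t unfolding condorcet_super_domain_def is_tiling_def by auto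
  have "is_tiling n (sm n {0,1,2::nat} (\<lambda>v. if v = 0 then T else if v = 1 then T' else X))"
    if "X \<in> D" for X
    using cs t that unfolding condorcet_super_domain_def by auto
  note h = this
  show "is_tiling n (T \<inter> T')" using h[OF e(1)] sm3[OF sub, of "{}"] by simp
  have u: "(if X = {} then T \<inter> T' else T \<union> T') = T \<union> T'" if "X = Lambda n" for X
    using sub that by auto
  show "is_tiling n (T \<union> T')" using h[OF e(2)] sm3[OF sub, of "Lambda n"] u[of "Lambda n"] by simp
qed

theorem proposition2:
  fixes n :: nat and D :: "nat set set set"
  assumes "n \<ge> 3"
    and "\<forall>T\<in>D. is_tiling n T"
    and "{} \<in> D" and "Lambda n \<in> D"
  shows "is_clique n D \<longleftrightarrow> condorcet_super_domain n D"
  using clique_condorcet condorcet_clique assms by blast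

end
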